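(* Let $A$ be a commutative semiring, $\rho$ a congruence on $A$, $(a,b),(c,d)\in A\times A$, and $c=z_1,z_2,\dots,z_n=d$ ($n\ge2$) a sequence of elements of $A$. If $(a,b)\ast(z_i,z_{i+1})\in\rho_+$ for all $i\in\{1,\dots,n-1\}$, then $(a,b)\ast(c,d)\in\rho_+$.
   Context: Semirings are commutative with $0$ and $1\neq0$, $0a=0$; congruences are equivalence relations compatible with $+,\cdot$. Twisted product $(a,b)\ast(c,d)=(ac+bd,ad+bc)$. $\rho_+=\{(u,v):(u+e,v+e)\in\rho$ for some $e\in A\}$. *)

theory Defs
  imports Main
begin

text \<open>Semirings: commutative, with 0, 1 \<noteq> 0 and 0a = 0 -- the class comm_semiring_1.\<close>

definition semiring_congruence :: "('a::comm_semiring_1 \<times> 'a) set \<Rightarrow> bool" where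
  "semiring_congruence \<rho> \<longleftrightarrow> equiv UNIV \<rho> \<and>
     (\<forall>a b c. (a, b) \<in> \<rho> \<longrightarrow> (a + c, b + c) \<in> \<rho> \<and> (a * c, b * c) \<in> \<rho>)"

definition twisted_prod :: "'a::comm_semiring_1 \<times> 'a \<Rightarrow> 'a \<times> 'a \<Rightarrow> 'a \<times> 'a" where
  "twisted_prod p q = (fst p * fst q + snd p * snd q, fst p * snd q + snd p * fst q)"

definition rho_plus :: "('a::comm_semiring_1 \<times> 'a) set \<Rightarrow> ('a \<times> 'a) set" where
  "rho_plus \<rho> = {(u, v). \<exists>e. (u + e, v + e) \<in> \<rho>}"

end

theory Submission
  imports Defs
begin

lemma cong_add:
  assumes "semiring_congruence \<rho>" "(p, q) \<in> \<rho>" "(r, s) \<in> \<rho>"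
  shows "(p + r, q + s) \<in> \<rho>"
proof -
  have e: "equiv UNIV \<rho>" using assms(1) unfolding semiring_congruence_def by blast
  have "(p + r, q + r) \<in> \<rho>" using assms(1,2) unfolding semiring_congruence_def by blast
  moreover have "(s + q, r + q) \<in> \<rho>"
  proof -
    have "(s, r) \<in> \<rho>" using e assms(3) by (meson equivE symE)
    thus ?thesis using assms(1) unfolding semiring_congruence_def by blast
  qed
  hence "(r + q, s + q) \<in> \<rho>" using e by (meson equivE symE)
  hence "(q + r, q + s) \<in> \<rho>" by (simp add: add.commute)
  ultimately show ?thesis using e by (meson equivE transE)
qed

lemma step:
  assumes C: "semiring_congruence \<rho>"
    and "twisted_prod (a, b) (x, y) \<in> rho_plus \<rho>"
    and "twisted_prod (a, b) (y, w) \<in> rho_plus \<rho>"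
  shows "twisted_prod (a, b) (x, w) \<in> rho_plus \<rho>"
proof -
  obtain e where e: "(a*x + b*y + e, a*y + b*x + e) \<in> \<rho>"
    using assms(2) unfolding twisted_prod_def rho_plus_def by auto
  obtain f where f: "(a*y + b*w + f, a*w + b*y + f) \<in> \<rho>"
    using assms(3) unfolding twisted_prod_def rho_plus_def by auto
  have "((a*x + b*y + e) + (a*y + b*w + f), (a*y + b*x + e) + (a*w + b*y + f)) \<in> \<rho>"
    using cong_add[OF C e f] .
  moreover have "(a*x + b*y + e) + (a*y + b*w + f) = (a*x + b*w) + (e + f + a*y + b*y)"
    by (simp add: algebra_simps)
  moreover have "(a*y + b*x + e) + (a*w + b*y + f) = (a*w + b*x) + (e + f + a*y + b*y)"
    by (simp add: algebra_simps)
  ultimately have "((a*x + b*w) + (e + f + a*y + b*y), (a*w + b*x) + (e + f + a*y + b*y)) \<in> \<rho>"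
    by simp
  thus ?thesis unfolding twisted_prod_def rho_plus_def by auto
qed

theorem lemma2p22:
  fixes \<rho> :: "('a::comm_semiring_1 \<times> 'a) set"
    and a b c d :: 'a and z :: "nat \<Rightarrow> 'a" and n :: nat
  assumes "semiring_congruence \<rho>"
    and "n \<ge> 2"
    and "z 1 = c" and "z n = d"
    and "\<forall>i\<in>{1..n-1}. twisted_prod (a, b) (z i, z (i + 1)) \<in> rho_plus \<rho>"
  shows "twisted_prod (a, b) (c, d) \<in> rho_plus \<rho>"
proof -
  have "\<forall>m. 1 \<le> m \<longrightarrow> m \<le> n - 1 \<longrightarrow> twisted_prod (a, b) (z 1, z (m + 1)) \<in> rho_plus \<rho>"
  proof (intro allI)
    fix m show "1 \<le> m \<longrightarrow> m \<le> n - 1 \<longrightarrow> twisted_prod (a, b) (z 1, z (m + 1)) \<in> rho_plus \<rho>"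
    proof (induction m)
      case 0 then show ?case by simp
    next
      case (Suc k)
      show ?case
      proof (intro impI)
        assume h: "1 \<le> Suc k" "Suc k \<le> n - 1"
        show "twisted_prod (a, b) (z 1, z (Suc k + 1)) \<in> rho_plus \<rho>"
        proof (cases "k = 0")
          case True then show ?thesis using assms(5) h by auto
        next
          case False
          hence "twisted_prod (a, b) (z 1, z (k + 1)) \<in> rho_plus \<rho>" using Suc.IH h by auto
          moreover have "twisted_prod (a, b) (z (k+1), z (k + 1 + 1)) \<in> rho_plus \<rho>"
            using assms(5) h by auto
          ultimately show ?thesis using step[OF assms(1)] by simp
        qed
      qed
    qed
  qed
  hence "twisted_prod (a, b) (z 1, z (n - 1 + 1)) \<in> rho_plus \<rho>" proof -
    have "1 \<le> n - 1" "n - 1 \<le> n - 1" using assms(2) by auto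
    thus ?thesis using \<open>\<forall>m. _\<close> by blast
  qed
  moreover have "n - 1 + 1 = n" using assms(2) by simp
  ultimately show ?thesis using assms by simp
qed

end
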